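(* A complex linear map $\Phi: M_n(\mathbb{C}) \to M_r(\mathbb{C})$ preserves range orthogonality, i.e. $\Phi(A)^*\Phi(B) = 0$ whenever $A^*B = 0$, if and only if there exist a nonnegative integer $k$ with $nk \le r$ and matrices $S, T \in M_r(\mathbb{C})$ with $S^*S = I_r$ such that $$\Phi(A) = S\begin{pmatrix} I_k\otimes A & 0\\ 0 & 0_{r-nk}\end{pmatrix}T\quad\text{for all } A\in M_n(\mathbb{C}).$$
   Context: $A^*$ denotes the conjugate transpose; $I_k\otimes A$ denotes $A\oplus\cdots\oplus A$ ($k$ copies). *)

theory Defs
  imports "Jordan_Normal_Form.Schur_Decomposition"
begin

definition lin_mat_map :: "nat \<Rightarrow> nat \<Rightarrow> (complex mat \<Rightarrow> complex mat) \<Rightarrow> bool" where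
  "lin_mat_map n r \<Phi> \<longleftrightarrow>
     (\<forall>A \<in> carrier_mat n n. \<Phi> A \<in> carrier_mat r r) \<and>
     (\<forall>A \<in> carrier_mat n n. \<forall>B \<in> carrier_mat n n. \<Phi> (A + B) = \<Phi> A + \<Phi> B) \<and>
     (\<forall>c. \<forall>A \<in> carrier_mat n n. \<Phi> (c \<cdot>\<^sub>m A) = c \<cdot>\<^sub>m \<Phi> A)"

text \<open>The block matrix diag(I_k tensor A, 0_(r-nk)) of size r, where I_k tensor A = A + ... + A (k copies, direct sum).\<close>
definition pad_kron :: "nat \<Rightarrow> nat \<Rightarrow> complex mat \<Rightarrow> complex mat" where
  "pad_kron r k A = (let m = dim_row A * k in
     four_block_mat (diag_block_mat (replicate k A)) (0\<^sub>m m (r - m))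
                    (0\<^sub>m (r - m) m) (0\<^sub>m (r - m) (r - m)))"

end

theory Submission
  imports Defs
begin

lemma mult_entry:
  assumes "A \<in> carrier_mat a b" "B \<in> carrier_mat b c" "i < a" "j < c"
  shows "(A*B)$$(i,j) = (\<Sum>l<b. A$$(i,l)*B$$(l,j))"
  using assms by (auto simp: scalar_prod_def atLeast0LessThan intro!: sum.cong)

lemma adj_carrier: "A \<in> carrier_mat a b \<Longrightarrow> mat_adjoint A \<in> carrier_mat b a"
  unfolding mat_adjoint_def by auto

lemma adj_entry: "A \<in> carrier_mat a b \<Longrightarrow> i < b \<Longrightarrow> j < a \<Longrightarrow>
  mat_adjoint A $$ (i,j) = cnj (A$$(j,i))"
  unfolding mat_adjoint_def by (auto simp: mat_of_rows_index)



lemma diag_rep_carrier: "A \<in> carrier_mat n n \<Longrightarrow> diag_block_mat (replicate k A) \<in> carrier_mat (n*k) (n*k)"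
  by (induct k) (auto simp: Let_def four_block_mat_def)

lemma diag_rep_entry:
  assumes A: "A \<in> carrier_mat n n" and pq: "p < n*k" "q < n*k"
  shows "diag_block_mat (replicate k A) $$ (p,q) = (if p div n = q div n then A $$ (p mod n, q mod n) else 0)"
  using pq
proof (induct k arbitrary: p q)
  case 0 then show ?case by simp
next
  case (Suc k)
  have D: "diag_block_mat (replicate k A) \<in> carrier_mat (n*k) (n*k)" using diag_rep_carrier[OF A] .
  have n0: "n > 0" using Suc by (cases n) auto
  have e: "diag_block_mat (replicate (Suc k) A) = four_block_mat A (0\<^sub>m n (n*k)) (0\<^sub>m (n*k) n) (diag_block_mat (replicate k A))"
    using A D by (simp add: Let_def)
  show ?case
  proof (cases "p < n")
    case True
    then show ?thesis using Suc.prems A D n0 unfolding e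
      by (auto simp: div_if)
  next
    case False
    note pn = False
    show ?thesis
    proof (cases "q < n")
      case True
      then show ?thesis using Suc.prems A D n0 pn unfolding e by (auto simp: div_if)
    next
      case False
      have "p - n < n*k" "q - n < n*k" using Suc.prems pn False by auto
      from Suc.hyps[OF this] have IH: "diag_block_mat (replicate k A) $$ (p-n, q-n) =
        (if (p-n) div n = (q-n) div n then A $$ ((p-n) mod n, (q-n) mod n) else 0)" .
      have "(p-n) div n = p div n - 1" "(q-n) div n = q div n - 1" "(p-n) mod n = p mod n" "(q-n) mod n = q mod n"
        using pn False n0 by (auto simp: div_if mod_if)
      moreover have "p div n \<ge> 1" "q div n \<ge> 1" using pn False n0 by (auto simp: div_if)
      ultimately show ?thesis using Suc.prems A D n0 pn False IH unfolding e by auto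
    qed
  qed
qed

lemma pad_carrier: "A \<in> carrier_mat n n \<Longrightarrow> n*k \<le> r \<Longrightarrow> pad_kron r k A \<in> carrier_mat r r"
  unfolding pad_kron_def Let_def using diag_rep_carrier[of A n k] by auto

lemma pad_entry:
  assumes A: "A \<in> carrier_mat n n" and nk: "n*k \<le> r" and pq: "p < r" "q < r"
  shows "pad_kron r k A $$ (p,q) = (if p < n*k \<and> q < n*k \<and> p div n = q div n then A $$ (p mod n, q mod n) else 0)"
proof -
  have D: "diag_block_mat (replicate k A) \<in> carrier_mat (n*k) (n*k)" using diag_rep_carrier[OF A] .
  have dr: "dim_row A = n" using A by auto
  show ?thesis unfolding pad_kron_def Let_def dr using D nk pq diag_rep_entry[OF A, of p k q]
    by auto
qed



definition ip :: "nat \<Rightarrow> (nat \<Rightarrow> complex) \<Rightarrow> (nat \<Rightarrow> complex) \<Rightarrow> complex" where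
  "ip r u v = (\<Sum>p<r. cnj (u p) * v p)"

lemma ip_conj: "ip r v u = cnj (ip r u v)"
  unfolding ip_def by (simp add: mult.commute)

lemma ip_self: "ip r e e = of_real (\<Sum>p<r. (cmod (e p))^2)"
  unfolding ip_def of_real_sum by (rule sum.cong) (auto simp: complex_norm_square mult.commute simp del: of_real_power)

lemma ip_self_zero: assumes "ip r e e = 0" "p < r" shows "e p = 0"
proof -
  have "(\<Sum>p<r. (cmod (e p))^2) = 0" using assms(1) unfolding ip_self of_real_eq_0_iff .
  then have "\<forall>p\<in>{..<r}. (cmod (e p))^2 = 0" by (subst sum_nonneg_eq_0_iff[symmetric]) auto
  then show ?thesis using assms(2) by auto
qed

lemma ip_diff_sum_right:
  "ip r u (\<lambda>p. v p - (\<Sum>b\<in>B. c b * z b p)) = ip r u v - (\<Sum>b\<in>B. c b * ip r u (z b))"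
  unfolding ip_def
  by (simp add: right_diff_distrib sum_subtractf sum_distrib_left sum.swap[of _ B] mult.assoc mult.left_commute)

lemma ip_diff_sum_left:
  "ip r (\<lambda>p. v p - (\<Sum>b\<in>B. c b * z b p)) u = ip r v u - (\<Sum>b\<in>B. cnj (c b) * ip r (z b) u)"
  unfolding ip_def
  by (simp add: left_diff_distrib sum_subtractf sum_distrib_left sum_distrib_right sum.swap[of _ B] mult.assoc mult.left_commute)

lemma ip_div_right: "ip r u (\<lambda>p. v p / a) = ip r u v / a"
  unfolding ip_def by (simp add: sum_divide_distrib)

lemma ip_div_left: "ip r (\<lambda>p. v p / a) u = ip r v u / cnj a"
  unfolding ip_def by (simp add: sum_divide_distrib)



definition inv_gs :: "nat \<Rightarrow> nat \<Rightarrow> (nat \<Rightarrow> nat \<Rightarrow> nat \<Rightarrow> complex) \<Rightarrow> nat \<Rightarrow> (nat \<Rightarrow> nat \<Rightarrow> nat \<Rightarrow> complex) \<Rightarrow> nat \<Rightarrow> bool" where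
"inv_gs r n f k w N \<longleftrightarrow>
 (\<forall>i<n. \<forall>i'<n. \<forall>b<k. \<forall>b'<k. ip r (w i b) (w i' b') = (if i = i' \<and> b = b' then 1 else 0)) \<and>
 (\<exists>h. \<forall>i<n. \<forall>i'<n. \<forall>b<k. \<forall>\<alpha>. ip r (w i b) (f i' \<alpha>) = (if i = i' then h b \<alpha> else 0)) \<and>
 (\<forall>\<alpha><N. \<exists>x. \<forall>i<n. \<forall>p<r. f i \<alpha> p = (\<Sum>b<k. x b * w i b p))"

lemma sum_delta_mult: assumes "b < (k::nat)" shows "(\<Sum>b'<k. c b' * (if b = b' then 1 else 0)) = (c b :: complex)"
proof -
  have "(\<Sum>b'<k. c b' * (if b = b' then 1 else 0)) = (\<Sum>b'\<in>{..<k}. if b' = b then c b' else 0)"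
    by (rule sum.cong) auto
  also have "\<dots> = c b" using assms by (subst sum.delta) auto
  finally show ?thesis .
qed

lemma gs_step:
  assumes Gf: "\<forall>i<n. \<forall>i'<n. \<forall>\<alpha> \<beta>. ip r (f i \<alpha>) (f i' \<beta>) = (if i = i' then g \<alpha> \<beta> else 0)"
    and inv: "inv_gs r n f k w N"
  shows "\<exists>k' w'. k \<le> k' \<and> (\<forall>i b. b < k \<longrightarrow> w' i b = w i b) \<and> inv_gs r n f k' w' (Suc N)"
proof (cases "n = 0")
  case True
  show ?thesis by (intro exI[of _ k] exI[of _ w]) (simp add: inv_gs_def True)
next
  case False
  then have n0: "0 < n" by simp
  from inv obtain h where
    I1: "\<forall>i<n. \<forall>i'<n. \<forall>b<k. \<forall>b'<k. ip r (w i b) (w i' b') = (if i = i' \<and> b = b' then 1 else 0)" and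
    I2: "\<forall>i<n. \<forall>i'<n. \<forall>b<k. \<forall>\<alpha>. ip r (w i b) (f i' \<alpha>) = (if i = i' then h b \<alpha> else 0)" and
    I3: "\<forall>\<alpha><N. \<exists>x. \<forall>i<n. \<forall>p<r. f i \<alpha> p = (\<Sum>b<k. x b * w i b p)"
    unfolding inv_gs_def by blast
  define e where "e i = (\<lambda>p. f i N p - (\<Sum>b<k. h b N * w i b p))" for i
  define H where "H \<alpha> = g N \<alpha> - (\<Sum>b<k. cnj (h b N) * h b \<alpha>)" for \<alpha>
  have a: "ip r (w i b) (e i') = 0" if "i<n" "i'<n" "b<k" for i i' b
  proof -
    have "(\<Sum>b'<k. h b' N * ip r (w i b) (w i' b')) = (\<Sum>b'<k. h b' N * (if i = i' \<and> b = b' then 1 else 0))"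
      by (rule sum.cong) (use I1 that in auto)
    also have "\<dots> = (if i = i' then h b N else 0)"
      using that by (cases "i = i'") (simp_all add: sum_delta_mult)
    finally show ?thesis unfolding e_def ip_diff_sum_right using I2 that by simp
  qed
  have b: "ip r (e i) (f i' \<alpha>) = (if i = i' then H \<alpha> else 0)" if "i<n" "i'<n" for i i' \<alpha>
  proof -
    have "(\<Sum>b<k. cnj (h b N) * ip r (w i b) (f i' \<alpha>)) = (\<Sum>b<k. cnj (h b N) * (if i = i' then h b \<alpha> else 0))"
      by (rule sum.cong) (use I2 that in auto)
    then show ?thesis unfolding e_def ip_diff_sum_left H_def using Gf that by (cases "i = i'") auto
  qed
  have c: "ip r (e i) (e i') = (if i = i' then H N else 0)" if "i<n" "i'<n" for i i'
  proof -
    have ei': "e i' = (\<lambda>p. f i' N p - (\<Sum>b<k. h b N * w i' b p))" by (simp add: e_def)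
    have "(\<Sum>b<k. h b N * ip r (e i) (w i' b)) = 0"
    proof (rule sum.neutral, intro ballI)
      fix b assume "b \<in> {..<k}"
      then have "ip r (w i' b) (e i) = 0" using a that by auto
      then show "h b N * ip r (e i) (w i' b) = 0" by (subst ip_conj) simp
    qed
    then show ?thesis by (subst ei') (simp add: ip_diff_sum_right b that)
  qed
  show ?thesis
  proof (cases "H N = 0")
    case True
    have e0: "e i p = 0" if "i<n" "p<r" for i p
      using ip_self_zero[of r "e i" p] c[OF that(1) that(1)] True that by simp
    show ?thesis
    proof (intro exI[of _ k] exI[of _ w] conjI)
      show "inv_gs r n f k w (Suc N)" unfolding inv_gs_def
      proof (intro conjI)
        show "\<forall>\<alpha><Suc N. \<exists>x. \<forall>i<n. \<forall>p<r. f i \<alpha> p = (\<Sum>b<k. x b * w i b p)"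
        proof (intro allI impI)
          fix \<alpha> assume "\<alpha> < Suc N"
          show "\<exists>x. \<forall>i<n. \<forall>p<r. f i \<alpha> p = (\<Sum>b<k. x b * w i b p)"
          proof (cases "\<alpha> < N")
            case True then show ?thesis using I3 by blast
          next
            case False
            then have "\<alpha> = N" using \<open>\<alpha> < Suc N\<close> by simp
            show ?thesis
            proof (intro exI[of _ "\<lambda>b. h b N"] allI impI)
              fix i p assume "i<n" "p<r"
              then have "e i p = 0" by (rule e0)
              then show "f i \<alpha> p = (\<Sum>b<k. h b N * w i b p)" unfolding e_def \<open>\<alpha> = N\<close> by simp
            qed
          qed
        qed
      qed (use I1 I2 in blast)+
    qed auto
  next
    case False
    define t where "t = (\<Sum>p<r. (cmod (e 0 p))^2)"
    have HN: "H N = of_real t" using c[OF n0 n0] ip_self[of r "e 0"] unfolding t_def by simp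
    have "t \<ge> 0" unfolding t_def by (simp add: sum_nonneg)
    moreover have "t \<noteq> 0" using HN False by simp
    ultimately have tpos: "t > 0" by simp
    define nc where "nc = complex_of_real (sqrt t)"
    have nc0: "nc \<noteq> 0" using tpos unfolding nc_def by simp
    have ncc: "cnj nc * nc = H N" unfolding nc_def HN using tpos
      by (simp flip: of_real_mult)
    define w' where "w' i b = (if b = k then (\<lambda>p. e i p / nc) else w i b)" for i b
    show ?thesis
    proof (intro exI[of _ "Suc k"] exI[of _ w'] conjI)
      show "\<forall>i b. b < k \<longrightarrow> w' i b = w i b" unfolding w'_def by auto
      show "inv_gs r n f (Suc k) w' (Suc N)" unfolding inv_gs_def
      proof (intro conjI)
        show "\<forall>i<n. \<forall>i'<n. \<forall>b<Suc k. \<forall>b'<Suc k. ip r (w' i b) (w' i' b') = (if i = i' \<and> b = b' then 1 else 0)"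
        proof (intro allI impI)
          fix i i' b b' assume ii: "i<n" "i'<n" and bb: "b < Suc k" "b' < Suc k"
          show "ip r (w' i b) (w' i' b') = (if i = i' \<and> b = b' then 1 else 0)"
          proof (cases "b = k")
            case True
            show ?thesis
            proof (cases "b' = k")
              case True
              have "ip r (w' i b) (w' i' b') = ip r (e i) (e i') / nc / cnj nc"
                unfolding w'_def using \<open>b = k\<close> True by (simp add: ip_div_left ip_div_right)
              also have "\<dots> = (if i = i' then 1 else 0)" using c[OF ii] ncc nc0
                by (auto simp: field_simps)
              finally show ?thesis using \<open>b = k\<close> True by simp
            next
              case False
              then have "b' < k" using bb by simp
              have "ip r (w' i b) (w' i' b') = cnj (ip r (w i' b') (e i)) / cnj nc"
                unfolding w'_def using \<open>b = k\<close> False by (simp add: ip_div_left ip_conj[of r "e i"])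
              then show ?thesis using a[OF ii(2) ii(1) \<open>b' < k\<close>] \<open>b = k\<close> \<open>b' < k\<close> by simp
            qed
          next
            case False
            then have "b < k" using bb by simp
            show ?thesis
            proof (cases "b' = k")
              case True
              have "ip r (w' i b) (w' i' b') = ip r (w i b) (e i') / nc"
                unfolding w'_def using \<open>b < k\<close> True by (simp add: ip_div_right)
              then show ?thesis using a[OF ii \<open>b < k\<close>] \<open>b < k\<close> True by simp
            next
              case False
              then show ?thesis unfolding w'_def using I1 ii bb \<open>b < k\<close> by auto
            qed
          qed
        qed
        show "\<exists>h. \<forall>i<n. \<forall>i'<n. \<forall>b<Suc k. \<forall>\<alpha>. ip r (w' i b) (f i' \<alpha>) = (if i = i' then h b \<alpha> else 0)"
        proof (intro exI[of _ "\<lambda>b \<alpha>. if b = k then H \<alpha> / cnj nc else h b \<alpha>"] allI impI)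
          fix i i' b \<alpha> assume ii: "i<n" "i'<n" and bb: "b < Suc k"
          show "ip r (w' i b) (f i' \<alpha>) = (if i = i' then (if b = k then H \<alpha> / cnj nc else h b \<alpha>) else 0)"
          proof (cases "b = k")
            case True then show ?thesis unfolding w'_def by (simp add: ip_div_left b[OF ii])
          next
            case False then show ?thesis unfolding w'_def using I2 ii bb by auto
          qed
        qed
        show "\<forall>\<alpha><Suc N. \<exists>x. \<forall>i<n. \<forall>p<r. f i \<alpha> p = (\<Sum>b<Suc k. x b * w' i b p)"
        proof (intro allI impI)
          fix \<alpha> assume "\<alpha> < Suc N"
          show "\<exists>x. \<forall>i<n. \<forall>p<r. f i \<alpha> p = (\<Sum>b<Suc k. x b * w' i b p)"
          proof (cases "\<alpha> < N")
            case True
            then obtain x where x: "\<forall>i<n. \<forall>p<r. f i \<alpha> p = (\<Sum>b<k. x b * w i b p)" using I3 by blast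
            show ?thesis
            proof (intro exI[of _ "x(k := 0)"] allI impI)
              fix i p assume "i<n" "p<r"
              have "(\<Sum>b<k. (x(k := 0)) b * w' i b p) = (\<Sum>b<k. x b * w i b p)"
                by (rule sum.cong) (auto simp: w'_def)
              then show "f i \<alpha> p = (\<Sum>b<Suc k. (x(k := 0)) b * w' i b p)" using x \<open>i<n\<close> \<open>p<r\<close> by simp
            qed
          next
            case False
            then have "\<alpha> = N" using \<open>\<alpha> < Suc N\<close> by simp
            show ?thesis
            proof (intro exI[of _ "(\<lambda>b. h b N)(k := nc)"] allI impI)
              fix i p assume "i<n" "p<r"
              have "(\<Sum>b<k. ((\<lambda>b. h b N)(k := nc)) b * w' i b p) = (\<Sum>b<k. h b N * w i b p)"
                by (rule sum.cong) (auto simp: w'_def)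
              then show "f i \<alpha> p = (\<Sum>b<Suc k. ((\<lambda>b. h b N)(k := nc)) b * w' i b p)"
                using nc0 unfolding \<open>\<alpha> = N\<close> by (simp add: w'_def e_def)
            qed
          qed
        qed
      qed
    qed simp
  qed
qed

lemma gs_iter:
  assumes Gf: "\<forall>i<n. \<forall>i'<n. \<forall>\<alpha> \<beta>. ip r (f i \<alpha>) (f i' \<beta>) = (if i = i' then g \<alpha> \<beta> else 0)"
    and inv: "inv_gs r n f k w 0"
  shows "\<exists>k' w'. k \<le> k' \<and> (\<forall>i b. b < k \<longrightarrow> w' i b = w i b) \<and> inv_gs r n f k' w' N"
proof (induct N)
  case 0 then show ?case using inv by blast
next
  case (Suc N)
  then obtain k1 w1 where "k \<le> k1" "\<forall>i b. b < k \<longrightarrow> w1 i b = w i b" "inv_gs r n f k1 w1 N" by blast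
  moreover from gs_step[OF Gf this(3)] obtain k2 w2 where
    "k1 \<le> k2" "\<forall>i b. b < k1 \<longrightarrow> w2 i b = w1 i b" "inv_gs r n f k2 w2 (Suc N)" by blast
  ultimately show ?case by (intro exI[of _ k2] exI[of _ w2]) auto
qed



lemma complete_unitary:
  assumes orth: "\<forall>c<m. \<forall>c'<m. ip r (v c) (v c') = (if c = c' then 1 else 0)"
  shows "m \<le> r \<and> (\<exists>u. (\<forall>c<m. u c = v c) \<and> (\<forall>c<r. \<forall>c'<r. ip r (u c) (u c') = (if c = c' then 1 else 0)))"
proof -
  define f :: "nat \<Rightarrow> nat \<Rightarrow> nat \<Rightarrow> complex" where "f i \<alpha> = (\<lambda>p. if p = \<alpha> then 1 else 0)" for i \<alpha>
  define g where "g \<alpha> \<beta> = ip r (f 0 \<alpha>) (f 0 \<beta>)" for \<alpha> \<beta>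
  have Gf: "\<forall>i<1. \<forall>i'<1. \<forall>\<alpha> \<beta>. ip r (f i \<alpha>) (f i' \<beta>) = (if i = i' then g \<alpha> \<beta> else 0)"
    unfolding g_def by auto
  define w :: "nat \<Rightarrow> nat \<Rightarrow> nat \<Rightarrow> complex" where "w i b = v b" for i b
  have inv0: "inv_gs r 1 f m w 0" unfolding inv_gs_def
  proof (intro conjI)
    show "\<forall>i<1. \<forall>i'<1. \<forall>b<m. \<forall>b'<m. ip r (w i b) (w i' b') = (if i = i' \<and> b = b' then 1 else 0)"
    proof (intro allI impI)
      fix i i' b b' assume "i < (1::nat)" "i' < (1::nat)" "b < m" "b' < m"
      then have "i = 0" "i' = 0" by auto
      then show "ip r (w i b) (w i' b') = (if i = i' \<and> b = b' then 1 else 0)"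
        unfolding w_def using orth \<open>b < m\<close> \<open>b' < m\<close> by simp
    qed
    show "\<exists>h. \<forall>i<1. \<forall>i'<1. \<forall>b<m. \<forall>\<alpha>. ip r (w i b) (f i' \<alpha>) = (if i = i' then h b \<alpha> else 0)"
    proof (intro exI[of _ "\<lambda>b \<alpha>. ip r (v b) (f 0 \<alpha>)"] allI impI)
      fix i i' b \<alpha> assume "i < (1::nat)" "i' < (1::nat)" "b < m"
      then have "i = 0" "i' = 0" by auto
      then show "ip r (w i b) (f i' \<alpha>) = (if i = i' then ip r (v b) (f 0 \<alpha>) else 0)"
        unfolding w_def by simp
    qed
    show "\<forall>\<alpha><0. \<exists>x. \<forall>i<1. \<forall>p<r. f i \<alpha> p = (\<Sum>b<m. x b * w i b p)" by simp
  qed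
  have "\<exists>K w'. m \<le> K \<and> (\<forall>i b. b < m \<longrightarrow> w' i b = w i b) \<and> inv_gs r 1 f K w' r"
    by (rule gs_iter[OF Gf inv0])
  then obtain K w' where KK: "m \<le> K \<and> (\<forall>i b. b < m \<longrightarrow> w' i b = w i b) \<and> inv_gs r 1 f K w' r"
    by (elim exE) (rule that)
  have K: "m \<le> K" "\<forall>i b. b < m \<longrightarrow> w' i b = w i b" "inv_gs r 1 f K w' r"
    using KK by (rule conjunct1, rule conjunct1[OF conjunct2], rule conjunct2[OF conjunct2])
  define u where "u b = w' 0 b" for b
  have I1': "\<forall>i<1. \<forall>i'<1. \<forall>b<K. \<forall>b'<K. ip r (w' i b) (w' i' b') = (if i = i' \<and> b = b' then 1 else 0)"
    and I3': "\<forall>\<alpha><r. \<exists>x. \<forall>i<1. \<forall>p<r. f i \<alpha> p = (\<Sum>b<K. x b * w' i b p)"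
    using K(3)[unfolded inv_gs_def, THEN conjunct1] K(3)[unfolded inv_gs_def, THEN conjunct2, THEN conjunct2] by - assumption+
  have uo: "ip r (u b) (u b') = (if b = b' then 1 else 0)" if "b < K" "b' < K" for b b'
    using I1' that unfolding u_def by simp
  have ex: "\<forall>\<alpha><r. \<exists>x. \<forall>p<r. f 0 \<alpha> p = (\<Sum>b<K. x b * u b p)"
    unfolding u_def using I3' by simp
  have compl: "(\<Sum>b<K. cnj (u b \<alpha>) * u b p) = (if p = \<alpha> then 1 else 0)" if "\<alpha> < r" "p < r" for \<alpha> p
  proof -
    have "\<exists>x. \<forall>p<r. f 0 \<alpha> p = (\<Sum>b<K. x b * u b p)" using ex that(1) by simp
    then obtain x where x: "\<forall>p<r. f 0 \<alpha> p = (\<Sum>b<K. x b * u b p)" by (elim exE) (rule that)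
    have xb: "x b' = cnj (u b' \<alpha>)" if "b' < K" for b'
    proof -
      have "ip r (u b') (f 0 \<alpha>) = ip r (u b') (\<lambda>p. \<Sum>b<K. x b * u b p)"
        unfolding ip_def by (rule sum.cong) (use x in auto)
      also have "\<dots> = (\<Sum>b<K. x b * ip r (u b') (u b))"
        unfolding ip_def by (simp add: sum_distrib_left sum.swap[of _ "{..<K}"] mult.left_commute)
      also have "\<dots> = (\<Sum>b<K. x b * (if b' = b then 1 else 0))"
        by (rule sum.cong) (use uo that in auto)
      also have "\<dots> = x b'" using sum_delta_mult[OF that] .
      finally have "ip r (u b') (f 0 \<alpha>) = x b'" .
      moreover have "ip r (u b') (f 0 \<alpha>) = cnj (u b' \<alpha>)"
        unfolding ip_def f_def using \<open>\<alpha> < r\<close> by (simp add: if_distrib[of "\<lambda>z. _ * z"] cong: if_cong)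
      ultimately show ?thesis by simp
    qed
    have "f 0 \<alpha> p = (\<Sum>b<K. cnj (u b \<alpha>) * u b p)"
      using x \<open>p < r\<close> by (simp add: xb)
    then show ?thesis unfolding f_def by simp
  qed
  have "(\<Sum>b<K. ip r (u b) (u b)) = (\<Sum>b<K. (1::complex))" by (rule sum.cong) (simp_all add: uo)
  then have "of_nat K = (\<Sum>b<K. ip r (u b) (u b))" by simp
  also have "\<dots> = (\<Sum>p<r. \<Sum>b<K. cnj (u b p) * u b p)" unfolding ip_def by (rule sum.swap)
  also have "\<dots> = (\<Sum>p<r. (1::complex))" by (rule sum.cong) (auto simp: compl)
  finally have "of_nat K = (of_nat r :: complex)" by simp
  then have Kr: "K = r" by simp
  show ?thesis
  proof (intro conjI exI[of _ u])
    show "m \<le> r" using K Kr by simp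
    show "\<forall>c<m. u c = v c" using K(2) unfolding u_def w_def by auto
    show "\<forall>c<r. \<forall>c'<r. ip r (u c) (u c') = (if c = c' then 1 else 0)" using uo Kr by auto
  qed
qed



definition Emat :: "nat \<Rightarrow> nat \<Rightarrow> nat \<Rightarrow> complex mat" where
  "Emat n i j = mat n n (\<lambda>(a,b). if a = i \<and> b = j then 1 else 0)"

lemma adj_dims[simp]: "dim_row (mat_adjoint A) = dim_col A" "dim_col (mat_adjoint A) = dim_row A"
  unfolding mat_adjoint_def by auto

lemma Emat_dims[simp]: "dim_row (Emat n i j) = n" "dim_col (Emat n i j) = n"
  unfolding Emat_def by auto

lemma Emat_carrier[simp]: "Emat n i j \<in> carrier_mat n n"
  unfolding Emat_def by auto

lemma lin_expand:
  assumes lin: "lin_mat_map n r \<Phi>" and A: "A \<in> carrier_mat n n" and p: "p < r" and q: "q < r"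
  shows "\<Phi> A $$ (p,q) = (\<Sum>i<n. \<Sum>j<n. A $$ (i,j) * \<Phi> (Emat n i j) $$ (p,q))"
proof -
  have C: "\<And>B. B \<in> carrier_mat n n \<Longrightarrow> \<Phi> B \<in> carrier_mat r r"
    and Ad: "\<And>B C. B \<in> carrier_mat n n \<Longrightarrow> C \<in> carrier_mat n n \<Longrightarrow> \<Phi> (B + C) = \<Phi> B + \<Phi> C"
    and Sm: "\<And>c B. B \<in> carrier_mat n n \<Longrightarrow> \<Phi> (c \<cdot>\<^sub>m B) = c \<cdot>\<^sub>m \<Phi> B"
    using lin unfolding lin_mat_map_def by auto
  define As where "As S = mat n n (\<lambda>(a,b). if (a,b) \<in> S then A $$ (a,b) else 0)" for S
  have As_car: "As S \<in> carrier_mat n n" for S unfolding As_def by auto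
  have main: "finite S \<Longrightarrow> \<Phi> (As S) $$ (p,q) = (\<Sum>x\<in>S. A $$ x * \<Phi> (Emat n (fst x) (snd x)) $$ (p,q))" for S
  proof (induct S rule: finite_induct)
    case empty
    have "As {} = 0 \<cdot>\<^sub>m As {}" by (rule eq_matI) (auto simp: As_def)
    then have eq: "\<Phi> (As {}) = 0 \<cdot>\<^sub>m \<Phi> (As {})" using Sm[OF As_car] by metis
    have "\<Phi> (As {}) $$ (p,q) = (0 \<cdot>\<^sub>m \<Phi> (As {})) $$ (p,q)" by (metis eq)
    also have "\<dots> = 0" using C[OF As_car[of "{}"]] p q by auto
    finally show ?case by simp
  next
    case (insert x S)
    obtain a b where x: "x = (a,b)" by (cases x)
    have "As (insert x S) = As S + A $$ x \<cdot>\<^sub>m Emat n a b"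
      by (rule eq_matI) (use insert.hyps in \<open>auto simp: As_def Emat_def x\<close>)
    then have "\<Phi> (As (insert x S)) = \<Phi> (As S) + A $$ x \<cdot>\<^sub>m \<Phi> (Emat n a b)"
      using Ad[OF As_car, of "A $$ x \<cdot>\<^sub>m Emat n a b"] Sm[of "Emat n a b"] by simp
    then have "\<Phi> (As (insert x S)) $$ (p,q) = \<Phi> (As S) $$ (p,q) + A $$ x * \<Phi> (Emat n a b) $$ (p,q)"
      using C[OF As_car] C[of "Emat n a b"] p q by simp
    then show ?case using insert x by simp
  qed
  have "As ({..<n} \<times> {..<n}) = A" by (rule eq_matI) (use A in \<open>auto simp: As_def\<close>)
  then have "\<Phi> A $$ (p,q) = (\<Sum>x\<in>{..<n}\<times>{..<n}. A $$ x * \<Phi> (Emat n (fst x) (snd x)) $$ (p,q))"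
    using main[of "{..<n}\<times>{..<n}"] by simp
  also have "\<dots> = (\<Sum>i<n. \<Sum>j<n. A $$ (i,j) * \<Phi> (Emat n i j) $$ (p,q))"
    by (simp add: sum.cartesian_product case_prod_beta)
  finally show ?thesis .
qed

lemma adj_mult_entry:
  assumes "A \<in> carrier_mat a b" "B \<in> carrier_mat a c" "i < b" "j < c"
  shows "(mat_adjoint A * B) $$ (i,j) = (\<Sum>l<a. cnj (A $$ (l,i)) * B $$ (l,j))"
  using mult_entry[OF adj_carrier[OF assms(1)] assms(2-4)] adj_entry[OF assms(1)] assms by simp

lemma E_orth: assumes "i \<noteq> i'" shows "mat_adjoint (Emat n i j) * Emat n i' l = 0\<^sub>m n n"
proof (rule eq_matI)
  fix c d assume cd: "c < dim_row (0\<^sub>m n n :: complex mat)" "d < dim_col (0\<^sub>m n n :: complex mat)"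
  have "(mat_adjoint (Emat n i j) * Emat n i' l) $$ (c,d) = (\<Sum>a<n. cnj (Emat n i j $$ (a,c)) * Emat n i' l $$ (a,d))"
    using cd by (intro adj_mult_entry) auto
  also have "\<dots> = 0" by (rule sum.neutral) (use cd assms in \<open>auto simp: Emat_def\<close>)
  finally show "(mat_adjoint (Emat n i j) * Emat n i' l) $$ (c,d) = 0\<^sub>m n n $$ (c,d)" using cd by simp
qed (auto simp: adj_carrier)

lemma E_pair:
  assumes "i \<noteq> i'" "i < n" "i' < n"
  shows "mat_adjoint (Emat n i j + Emat n i' j) * (Emat n i l + (-1) \<cdot>\<^sub>m Emat n i' l) = 0\<^sub>m n n"
proof (rule eq_matI)
  fix c d assume cd: "c < dim_row (0\<^sub>m n n :: complex mat)" "d < dim_col (0\<^sub>m n n :: complex mat)"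
  have "(mat_adjoint (Emat n i j + Emat n i' j) * (Emat n i l + (-1) \<cdot>\<^sub>m Emat n i' l)) $$ (c,d)
     = (\<Sum>a<n. cnj ((Emat n i j + Emat n i' j) $$ (a,c)) * (Emat n i l + (-1) \<cdot>\<^sub>m Emat n i' l) $$ (a,d))"
    using cd by (intro adj_mult_entry) auto
  also have "\<dots> = (\<Sum>a<n. if c = j \<and> d = l then (if a = i then 1 else 0) - (if a = i' then 1 else 0) else 0)"
    by (rule sum.cong) (use cd assms in \<open>auto simp: Emat_def\<close>)
  also have "\<dots> = 0"
    using assms by (cases "c = j \<and> d = l") (simp_all add: sum_subtractf)
  finally show "(mat_adjoint (Emat n i j + Emat n i' j) * (Emat n i l + (-1) \<cdot>\<^sub>m Emat n i' l)) $$ (c,d) = 0\<^sub>m n n $$ (c,d)"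
    using cd by simp
qed (auto simp: adj_carrier)



lemma sum_lessThan_add: "(\<Sum>c<(m::nat)+l. G c) = (\<Sum>c<m. G c) + (\<Sum>i<l. G (m+i))"
  by (induct l) (auto simp: add.assoc)

lemma sum_blocks: "(\<Sum>c<(n::nat)*k. G c) = (\<Sum>b<k. \<Sum>i<n. G (b*n+i))"
proof (induct k)
  case 0 then show ?case by simp
next
  case (Suc k)
  have "(\<Sum>c<n*Suc k. G c) = (\<Sum>c<n*k + n. G c)" by (simp add: add.commute)
  also have "\<dots> = (\<Sum>c<n*k. G c) + (\<Sum>i<n. G (n*k+i))" by (rule sum_lessThan_add)
  finally show ?case using Suc by (simp add: mult.commute)
qed

lemma sum_restrict: assumes "(m::nat) \<le> r" "\<And>d. m \<le> d \<Longrightarrow> d < r \<Longrightarrow> G d = 0"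
  shows "(\<Sum>d<r. G d) = (\<Sum>d<m. G d)"
proof -
  have "(\<Sum>d<r. G d) = (\<Sum>d<m + (r - m). G d)" using assms(1) by simp
  also have "\<dots> = (\<Sum>d<m. G d) + (\<Sum>i<r-m. G (m+i))" by (rule sum_lessThan_add)
  also have "(\<Sum>i<r-m. G (m+i)) = 0" by (rule sum.neutral) (use assms in auto)
  finally show ?thesis by simp
qed

lemma divmod_blk: "(i::nat) < n \<Longrightarrow> (b*n+i) div n = b \<and> (b*n+i) mod n = i"
  by simp

lemma blk_less: "(j::nat) < n \<Longrightarrow> q < r \<Longrightarrow> j*r+q < n*r"
proof -
  assume "j < n" "q < r"
  then have "j*r + q < j*r + r" by simp
  also have "\<dots> = Suc j * r" by simp
  also have "\<dots> \<le> n * r" using \<open>j < n\<close> by (intro mult_le_mono1) simp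
  finally show ?thesis .
qed

locale rop_ctx =
  fixes n r :: nat and \<Phi> :: "complex mat \<Rightarrow> complex mat"
  assumes lin: "lin_mat_map n r \<Phi>"
    and rop: "\<forall>A \<in> carrier_mat n n. \<forall>B \<in> carrier_mat n n.
            mat_adjoint A * B = 0\<^sub>m n n \<longrightarrow> mat_adjoint (\<Phi> A) * \<Phi> B = 0\<^sub>m r r"
begin

lemma C: "B \<in> carrier_mat n n \<Longrightarrow> \<Phi> B \<in> carrier_mat r r"
  and Ad: "B \<in> carrier_mat n n \<Longrightarrow> B' \<in> carrier_mat n n \<Longrightarrow> \<Phi> (B + B') = \<Phi> B + \<Phi> B'"
  and Sm: "B \<in> carrier_mat n n \<Longrightarrow> \<Phi> (c \<cdot>\<^sub>m B) = c \<cdot>\<^sub>m \<Phi> B"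
  using lin unfolding lin_mat_map_def by auto

lemma FC: "\<Phi> (Emat n i j) \<in> carrier_mat r r" by (rule C) simp

lemma gram_cross:
  assumes "i \<noteq> i'" "q < r" "s < r"
  shows "(\<Sum>p<r. cnj (\<Phi> (Emat n i j) $$ (p,q)) * \<Phi> (Emat n i' l) $$ (p,s)) = 0"
proof -
  have "mat_adjoint (\<Phi> (Emat n i j)) * \<Phi> (Emat n i' l) = 0\<^sub>m r r"
    using rop E_orth[OF assms(1)] by simp
  then have "(mat_adjoint (\<Phi> (Emat n i j)) * \<Phi> (Emat n i' l)) $$ (q,s) = 0" using assms by simp
  then show ?thesis using adj_mult_entry[OF FC FC assms(2,3)] by simp
qed

lemma gram_same:
  assumes "i < n" "i' < n" "q < r" "s < r"
  shows "(\<Sum>p<r. cnj (\<Phi> (Emat n i j) $$ (p,q)) * \<Phi> (Emat n i l) $$ (p,s))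
       = (\<Sum>p<r. cnj (\<Phi> (Emat n i' j) $$ (p,q)) * \<Phi> (Emat n i' l) $$ (p,s))"
proof (cases "i = i'")
  case True then show ?thesis by simp
next
  case False
  let ?a = "\<lambda>p. \<Phi> (Emat n i j) $$ (p,q)"
  let ?a' = "\<lambda>p. \<Phi> (Emat n i' j) $$ (p,q)"
  let ?b = "\<lambda>p. \<Phi> (Emat n i l) $$ (p,s)"
  let ?b' = "\<lambda>p. \<Phi> (Emat n i' l) $$ (p,s)"
  have eA: "\<Phi> (Emat n i j + Emat n i' j) = \<Phi> (Emat n i j) + \<Phi> (Emat n i' j)" by (rule Ad) simp_all
  have eB: "\<Phi> (Emat n i l + (-1) \<cdot>\<^sub>m Emat n i' l) = \<Phi> (Emat n i l) + (-1) \<cdot>\<^sub>m \<Phi> (Emat n i' l)"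
    using Ad[of "Emat n i l" "(-1) \<cdot>\<^sub>m Emat n i' l"] Sm[of "Emat n i' l" "-1"] by simp
  have "mat_adjoint (\<Phi> (Emat n i j + Emat n i' j)) * \<Phi> (Emat n i l + (-1) \<cdot>\<^sub>m Emat n i' l) = 0\<^sub>m r r"
    using rop E_pair[OF False assms(1,2)] by simp
  then have "(mat_adjoint (\<Phi> (Emat n i j) + \<Phi> (Emat n i' j)) * (\<Phi> (Emat n i l) + (-1) \<cdot>\<^sub>m \<Phi> (Emat n i' l))) $$ (q,s) = 0"
    unfolding eA eB using assms by simp
  moreover have "(mat_adjoint (\<Phi> (Emat n i j) + \<Phi> (Emat n i' j)) * (\<Phi> (Emat n i l) + (-1) \<cdot>\<^sub>m \<Phi> (Emat n i' l))) $$ (q,s)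
     = (\<Sum>p<r. cnj ((\<Phi> (Emat n i j) + \<Phi> (Emat n i' j)) $$ (p,q)) * (\<Phi> (Emat n i l) + (-1) \<cdot>\<^sub>m \<Phi> (Emat n i' l)) $$ (p,s))"
    by (rule adj_mult_entry) (use FC assms in auto)
  moreover have "\<dots> = (\<Sum>p<r. (cnj (?a p) + cnj (?a' p)) * (?b p + (-1) * ?b' p))"
    by (rule sum.cong) (use FC[of i j] FC[of i' j] FC[of i l] FC[of i' l] assms in auto)
  moreover have "\<dots> = (\<Sum>p<r. cnj (?a p) * ?b p) - (\<Sum>p<r. cnj (?a p) * ?b' p) + (\<Sum>p<r. cnj (?a' p) * ?b p) - (\<Sum>p<r. cnj (?a' p) * ?b' p)"
    by (simp add: algebra_simps sum.distrib sum_subtractf)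
  moreover have "(\<Sum>p<r. cnj (?a p) * ?b' p) = 0" using gram_cross[OF False assms(3,4)] .
  moreover have "(\<Sum>p<r. cnj (?a' p) * ?b p) = 0" using gram_cross[of i' i, OF _ assms(3,4)] False by simp
  ultimately show ?thesis by simp
qed

end



context rop_ctx begin

lemma forward:
  "\<exists>k S T. n * k \<le> r \<and> S \<in> carrier_mat r r \<and> T \<in> carrier_mat r r \<and>
            mat_adjoint S * S = 1\<^sub>m r \<and>
            (\<forall>A \<in> carrier_mat n n. \<Phi> A = S * pad_kron r k A * T)"
proof -
  define F where "F i j = \<Phi> (Emat n i j)" for i j
  have FC': "F i j \<in> carrier_mat r r" for i j unfolding F_def by (rule FC)
  define f where "f i \<alpha> = (\<lambda>p. F i (\<alpha> div r) $$ (p, \<alpha> mod r))" for i \<alpha>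
  define g where "g \<alpha> \<beta> = ip r (f 0 \<alpha>) (f 0 \<beta>)" for \<alpha> \<beta>
  have Gf: "\<forall>i<n. \<forall>i'<n. \<forall>\<alpha> \<beta>. ip r (f i \<alpha>) (f i' \<beta>) = (if i = i' then g \<alpha> \<beta> else 0)"
  proof (intro allI impI)
    fix i i' \<alpha> \<beta> assume ii: "i < n" "i' < n"
    show "ip r (f i \<alpha>) (f i' \<beta>) = (if i = i' then g \<alpha> \<beta> else 0)"
    proof (cases "r = 0")
      case True then show ?thesis by (simp add: ip_def g_def)
    next
      case False
      then have qs: "\<alpha> mod r < r" "\<beta> mod r < r" by auto
      have ipF: "ip r (f a \<alpha>) (f a' \<beta>) = (\<Sum>p<r. cnj (\<Phi> (Emat n a (\<alpha> div r)) $$ (p, \<alpha> mod r)) * \<Phi> (Emat n a' (\<beta> div r)) $$ (p, \<beta> mod r))" for a a'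
        unfolding ip_def f_def F_def by simp
      show ?thesis
      proof (cases "i = i'")
        case True
        have n0: "0 < n" using ii by auto
        show ?thesis unfolding g_def ipF using gram_same[OF ii(1) n0 qs] True by simp
      next
        case False
        then show ?thesis unfolding ipF using gram_cross[OF False qs] by simp
      qed
    qed
  qed
  have inv0: "inv_gs r n f 0 (\<lambda>i b p. 0) 0" unfolding inv_gs_def by simp
  have "\<exists>k w. 0 \<le> k \<and> (\<forall>i b. b < 0 \<longrightarrow> w i b = (\<lambda>i b p. 0) i b) \<and> inv_gs r n f k w (n*r)"
    by (rule gs_iter[OF Gf inv0])
  then obtain k w where inv: "inv_gs r n f k w (n*r)" by (elim exE conjE) (rule that, assumption)
  have I1: "\<forall>i<n. \<forall>i'<n. \<forall>b<k. \<forall>b'<k. ip r (w i b) (w i' b') = (if i = i' \<and> b = b' then 1 else 0)"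
    by (rule inv[unfolded inv_gs_def, THEN conjunct1])
  have I3: "\<forall>\<alpha><n*r. \<exists>x. \<forall>i<n. \<forall>p<r. f i \<alpha> p = (\<Sum>b<k. x b * w i b p)"
    by (rule inv[unfolded inv_gs_def, THEN conjunct2, THEN conjunct2])
  have "\<forall>\<alpha>. \<exists>x. \<alpha> < n*r \<longrightarrow> (\<forall>i<n. \<forall>p<r. f i \<alpha> p = (\<Sum>b<k. x b * w i b p))"
  proof
    fix \<alpha> show "\<exists>x. \<alpha> < n*r \<longrightarrow> (\<forall>i<n. \<forall>p<r. f i \<alpha> p = (\<Sum>b<k. x b * w i b p))"
    proof (cases "\<alpha> < n*r")
      case True
      then have "\<exists>x. \<forall>i<n. \<forall>p<r. f i \<alpha> p = (\<Sum>b<k. x b * w i b p)" using I3 by simp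
      then obtain x where "\<forall>i<n. \<forall>p<r. f i \<alpha> p = (\<Sum>b<k. x b * w i b p)" by (elim exE) (rule that)
      then show ?thesis by (intro exI[of _ x] impI)
    qed simp
  qed
  from choice[OF this] obtain X where X: "\<forall>\<alpha>. \<alpha> < n*r \<longrightarrow> (\<forall>i<n. \<forall>p<r. f i \<alpha> p = (\<Sum>b<k. X \<alpha> b * w i b p))"
    by (elim exE) (rule that)
  define v where "v c = w (c mod n) (c div n)" for c
  have vo: "\<forall>c<n*k. \<forall>c'<n*k. ip r (v c) (v c') = (if c = c' then 1 else 0)"
  proof (intro allI impI)
    fix c c' assume cc: "c < n*k" "c' < n*k"
    then have n0: "0 < n" by (cases n) auto
    have lt: "c mod n < n" "c' mod n < n" "c div n < k" "c' div n < k"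
      using n0 cc by (auto simp: less_mult_imp_div_less mult.commute)
    have "ip r (v c) (v c') = (if c mod n = c' mod n \<and> c div n = c' div n then 1 else 0)"
      unfolding v_def using I1 lt by simp
    moreover have "(c mod n = c' mod n \<and> c div n = c' div n) = (c = c')"
      by (metis div_mult_mod_eq)
    ultimately show "ip r (v c) (v c') = (if c = c' then 1 else 0)" by simp
  qed
  have cu: "n*k \<le> r \<and> (\<exists>u. (\<forall>c<n*k. u c = v c) \<and> (\<forall>c<r. \<forall>c'<r. ip r (u c) (u c') = (if c = c' then 1 else 0)))"
    by (rule complete_unitary[OF vo])
  then have nk: "n*k \<le> r" by (rule conjunct1)
  from cu[THEN conjunct2] obtain u where uu: "(\<forall>c<n*k. u c = v c) \<and> (\<forall>c<r. \<forall>c'<r. ip r (u c) (u c') = (if c = c' then 1 else 0))"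
    by (elim exE) (rule that)
  have u1: "\<forall>c<n*k. u c = v c" by (rule uu[THEN conjunct1])
  have uo: "\<forall>c<r. \<forall>c'<r. ip r (u c) (u c') = (if c = c' then 1 else 0)" by (rule uu[THEN conjunct2])
  define S where "S = mat r r (\<lambda>(p,c). u c p)"
  define T where "T = mat r r (\<lambda>(c,q). if c < n*k then X ((c mod n)*r + q) (c div n) else 0)"
  have SC: "S \<in> carrier_mat r r" unfolding S_def by simp
  have TC: "T \<in> carrier_mat r r" unfolding T_def by simp
  show ?thesis
  proof (rule exI[of _ k], rule exI[of _ S], rule exI[of _ T], intro conjI ballI)
    show "n * k \<le> r" by (rule nk)
    show "S \<in> carrier_mat r r" by (rule SC)
    show "T \<in> carrier_mat r r" by (rule TC)
    show "mat_adjoint S * S = 1\<^sub>m r"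
    proof (rule eq_matI)
      fix c c' assume cc: "c < dim_row (1\<^sub>m r :: complex mat)" "c' < dim_col (1\<^sub>m r :: complex mat)"
      have "(mat_adjoint S * S) $$ (c,c') = (\<Sum>p<r. cnj (S $$ (p,c)) * S $$ (p,c'))"
        by (rule adj_mult_entry[OF SC SC]) (use cc in auto)
      also have "\<dots> = ip r (u c) (u c')" unfolding ip_def S_def by (rule sum.cong) (use cc in auto)
      also have "\<dots> = 1\<^sub>m r $$ (c,c')" using uo cc by simp
      finally show "(mat_adjoint S * S) $$ (c,c') = 1\<^sub>m r $$ (c,c')" .
    qed (use SC in auto)
    fix A :: "complex mat" assume A: "A \<in> carrier_mat n n"
    have PC: "pad_kron r k A \<in> carrier_mat r r" by (rule pad_carrier[OF A nk])
    show "\<Phi> A = S * pad_kron r k A * T"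
    proof (rule eq_matI)
      fix p q assume pq: "p < dim_row (S * pad_kron r k A * T)" "q < dim_col (S * pad_kron r k A * T)"
      then have p: "p < r" and q: "q < r" using SC TC by auto
      have SP: "(S * pad_kron r k A) $$ (p,c) = (if c < n*k then (\<Sum>i<n. w i (c div n) p * A $$ (i, c mod n)) else 0)"
        if c: "c < r" for c
      proof -
        have "(S * pad_kron r k A) $$ (p,c) = (\<Sum>d<r. S $$ (p,d) * pad_kron r k A $$ (d,c))"
          by (rule mult_entry[OF SC PC p c])
        also have "\<dots> = (\<Sum>d<r. u d p * (if d < n*k \<and> c < n*k \<and> d div n = c div n then A $$ (d mod n, c mod n) else 0))"
          by (rule sum.cong) (use p c pad_entry[OF A nk] in \<open>auto simp: S_def\<close>)
        also have "\<dots> = (\<Sum>d<n*k. u d p * (if d < n*k \<and> c < n*k \<and> d div n = c div n then A $$ (d mod n, c mod n) else 0))"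
          by (rule sum_restrict[OF nk]) simp
        also have "\<dots> = (\<Sum>b<k. \<Sum>i<n. u (b*n+i) p * (if b*n+i < n*k \<and> c < n*k \<and> (b*n+i) div n = c div n then A $$ ((b*n+i) mod n, c mod n) else 0))"
          by (rule sum_blocks)
        also have "\<dots> = (\<Sum>b<k. if b = c div n \<and> c < n*k then (\<Sum>i<n. w i b p * A $$ (i, c mod n)) else 0)"
        proof (rule sum.cong[OF refl])
          fix b assume b: "b \<in> {..<k}"
          show "(\<Sum>i<n. u (b*n+i) p * (if b*n+i < n*k \<and> c < n*k \<and> (b*n+i) div n = c div n then A $$ ((b*n+i) mod n, c mod n) else 0))
            = (if b = c div n \<and> c < n*k then (\<Sum>i<n. w i b p * A $$ (i, c mod n)) else 0)"
          proof (cases "b = c div n \<and> c < n*k")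
            case True
            show ?thesis
            proof -
              have "(\<Sum>i<n. u (b*n+i) p * (if b*n+i < n*k \<and> c < n*k \<and> (b*n+i) div n = c div n then A $$ ((b*n+i) mod n, c mod n) else 0))
                = (\<Sum>i<n. w i b p * A $$ (i, c mod n))"
              proof (rule sum.cong[OF refl])
                fix i assume i: "i \<in> {..<n}"
                then have dm: "(b*n+i) div n = b" "(b*n+i) mod n = i" using divmod_blk by auto
                have lt: "b*n+i < n*k" using blk_less[of b k i n] b i by (simp add: mult.commute)
                show "u (b*n+i) p * (if b*n+i < n*k \<and> c < n*k \<and> (b*n+i) div n = c div n then A $$ ((b*n+i) mod n, c mod n) else 0)
                  = w i b p * A $$ (i, c mod n)"
                  using u1 lt dm True unfolding v_def by simp
              qed
              then show ?thesis using True by simp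
            qed
          next
            case False
            show ?thesis
            proof -
              have "(\<Sum>i<n. u (b*n+i) p * (if b*n+i < n*k \<and> c < n*k \<and> (b*n+i) div n = c div n then A $$ ((b*n+i) mod n, c mod n) else 0)) = 0"
              proof (rule sum.neutral, intro ballI)
                fix i assume i: "i \<in> {..<n}"
                then have dm: "(b*n+i) div n = b" using divmod_blk by auto
                show "u (b*n+i) p * (if b*n+i < n*k \<and> c < n*k \<and> (b*n+i) div n = c div n then A $$ ((b*n+i) mod n, c mod n) else 0) = 0"
                  using False dm by auto
              qed
              then show ?thesis by (simp only: if_not_P[OF False])
            qed
          qed
        qed
        also have "\<dots> = (if c < n*k then (\<Sum>i<n. w i (c div n) p * A $$ (i, c mod n)) else 0)"
        proof (cases "c < n*k")
          case True
          then have "c div n < k" by (cases n) (auto simp: less_mult_imp_div_less mult.commute)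
          then show ?thesis using True by (simp add: sum.delta' if_distrib cong: if_cong)
        qed simp
        finally show ?thesis .
      qed
      have "(S * pad_kron r k A * T) $$ (p,q) = (\<Sum>c<r. (S * pad_kron r k A) $$ (p,c) * T $$ (c,q))"
        by (rule mult_entry[OF mult_carrier_mat[OF SC PC] TC p q])
      also have "\<dots> = (\<Sum>c<r. (if c < n*k then (\<Sum>i<n. w i (c div n) p * A $$ (i, c mod n)) else 0) * T $$ (c,q))"
        by (rule sum.cong) (auto simp: SP)
      also have "\<dots> = (\<Sum>c<n*k. (if c < n*k then (\<Sum>i<n. w i (c div n) p * A $$ (i, c mod n)) else 0) * T $$ (c,q))"
        by (rule sum_restrict[OF nk]) simp
      also have "\<dots> = (\<Sum>b<k. \<Sum>j<n. (if b*n+j < n*k then (\<Sum>i<n. w i ((b*n+j) div n) p * A $$ (i, (b*n+j) mod n)) else 0) * T $$ (b*n+j,q))"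
        by (rule sum_blocks)
      also have "\<dots> = (\<Sum>b<k. \<Sum>j<n. \<Sum>i<n. w i b p * A $$ (i, j) * X (j*r+q) b)"
      proof (intro sum.cong[OF refl])
        fix b j assume b: "b \<in> {..<k}" and j: "j \<in> {..<n}"
        then have dm: "(b*n+j) div n = b" "(b*n+j) mod n = j" using divmod_blk by auto
        have lt: "b*n+j < n*k" using blk_less[of b k j n] b j by (simp add: mult.commute)
        have "T $$ (b*n+j, q) = X (j*r+q) b" unfolding T_def using lt dm q nk by simp
        then show "(if b*n+j < n*k then (\<Sum>i<n. w i ((b*n+j) div n) p * A $$ (i, (b*n+j) mod n)) else 0) * T $$ (b*n+j,q)
          = (\<Sum>i<n. w i b p * A $$ (i, j) * X (j*r+q) b)"
          using lt dm by (simp add: sum_distrib_right)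
      qed
      also have "\<dots> = (\<Sum>j<n. \<Sum>b<k. \<Sum>i<n. w i b p * A $$ (i, j) * X (j*r+q) b)"
        by (rule sum.swap)
      also have "\<dots> = (\<Sum>j<n. \<Sum>i<n. \<Sum>b<k. w i b p * A $$ (i, j) * X (j*r+q) b)"
        by (rule sum.cong[OF refl]) (rule sum.swap)
      also have "\<dots> = (\<Sum>i<n. \<Sum>j<n. \<Sum>b<k. w i b p * A $$ (i, j) * X (j*r+q) b)"
        by (rule sum.swap)
      also have "\<dots> = (\<Sum>i<n. \<Sum>j<n. A $$ (i,j) * \<Phi> (Emat n i j) $$ (p,q))"
      proof (intro sum.cong[OF refl])
        fix i j assume i: "i \<in> {..<n}" and j: "j \<in> {..<n}"
        have jr: "(j*r+q) div r = j" "(j*r+q) mod r = q" using divmod_blk q by auto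
        have "\<Phi> (Emat n i j) $$ (p,q) = f i (j*r+q) p" unfolding f_def F_def jr ..
        also have "\<dots> = (\<Sum>b<k. X (j*r+q) b * w i b p)" using X blk_less[of j n q r] i j p q by auto
        finally show "(\<Sum>b<k. w i b p * A $$ (i, j) * X (j*r+q) b) = A $$ (i,j) * \<Phi> (Emat n i j) $$ (p,q)"
          by (simp add: sum_distrib_left mult_ac)
      qed
      also have "\<dots> = \<Phi> A $$ (p,q)" by (rule lin_expand[OF lin A p q, symmetric])
      finally show "\<Phi> A $$ (p,q) = (S * pad_kron r k A * T) $$ (p,q)" by simp
    qed (use C[OF A] SC TC in auto)
  qed
qed

end



lemma adj_mult:
  fixes A B :: "complex mat"
  assumes A: "A \<in> carrier_mat a b" and B: "B \<in> carrier_mat b c"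
  shows "mat_adjoint (A * B) = mat_adjoint B * mat_adjoint A"
proof (rule eq_matI)
  fix i j assume ij: "i < dim_row (mat_adjoint B * mat_adjoint A)" "j < dim_col (mat_adjoint B * mat_adjoint A)"
  then have i: "i < c" and j: "j < a" using A B by auto
  have "mat_adjoint (A * B) $$ (i,j) = cnj ((A*B) $$ (j,i))"
    by (rule adj_entry[OF mult_carrier_mat[OF A B] i j])
  also have "\<dots> = cnj (\<Sum>l<b. A $$ (j,l) * B $$ (l,i))" by (simp add: mult_entry[OF A B j i])
  also have "\<dots> = (\<Sum>l<b. cnj (B $$ (l,i)) * cnj (A $$ (j,l)))" by (simp add: mult.commute)
  also have "\<dots> = (mat_adjoint B * mat_adjoint A) $$ (i,j)"
    using mult_entry[OF adj_carrier[OF B] adj_carrier[OF A] i j] adj_entry[OF A] adj_entry[OF B] i j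
    by (auto intro!: sum.cong)
  finally show "mat_adjoint (A * B) $$ (i,j) = (mat_adjoint B * mat_adjoint A) $$ (i,j)" .
qed (use A B in auto)

lemma pad_orth:
  assumes A: "A \<in> carrier_mat n n" and B: "B \<in> carrier_mat n n" and nk: "n*k \<le> r"
    and AB: "mat_adjoint A * B = 0\<^sub>m n n"
  shows "mat_adjoint (pad_kron r k A) * pad_kron r k B = 0\<^sub>m r r"
proof (rule eq_matI)
  fix c c' assume cc: "c < dim_row (0\<^sub>m r r :: complex mat)" "c' < dim_col (0\<^sub>m r r :: complex mat)"
  then have c: "c < r" and c': "c' < r" by auto
  have PA: "pad_kron r k A \<in> carrier_mat r r" by (rule pad_carrier[OF A nk])
  have PB: "pad_kron r k B \<in> carrier_mat r r" by (rule pad_carrier[OF B nk])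
  let ?t = "\<lambda>d. cnj (if d < n*k \<and> c < n*k \<and> d div n = c div n then A $$ (d mod n, c mod n) else 0) *
                (if d < n*k \<and> c' < n*k \<and> d div n = c' div n then B $$ (d mod n, c' mod n) else 0)"
  have "(mat_adjoint (pad_kron r k A) * pad_kron r k B) $$ (c,c') = (\<Sum>d<r. cnj (pad_kron r k A $$ (d,c)) * pad_kron r k B $$ (d,c'))"
    by (rule adj_mult_entry[OF PA PB c c'])
  also have "\<dots> = (\<Sum>d<r. ?t d)"
    by (rule sum.cong) (use c c' pad_entry[OF A nk] pad_entry[OF B nk] in auto)
  also have "\<dots> = (\<Sum>d<n*k. ?t d)" by (rule sum_restrict[OF nk]) simp
  also have "\<dots> = (\<Sum>b<k. \<Sum>i<n. ?t (b*n+i))" by (rule sum_blocks)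
  also have "\<dots> = 0"
  proof (rule sum.neutral, intro ballI)
    fix b assume b: "b \<in> {..<k}"
    show "(\<Sum>i<n. ?t (b*n+i)) = 0"
    proof (cases "c < n*k \<and> c' < n*k \<and> b = c div n \<and> b = c' div n")
      case True
      have n0: "0 < n" using True by (cases n) auto
      have "(\<Sum>i<n. ?t (b*n+i)) = (\<Sum>i<n. cnj (A $$ (i, c mod n)) * B $$ (i, c' mod n))"
      proof (rule sum.cong[OF refl])
        fix i assume i: "i \<in> {..<n}"
        then have dm: "(b*n+i) div n = b" "(b*n+i) mod n = i" using divmod_blk by auto
        have lt: "b*n+i < n*k" using blk_less[of b k i n] b i by (simp add: mult.commute)
        show "?t (b*n+i) = cnj (A $$ (i, c mod n)) * B $$ (i, c' mod n)" using dm lt True by simp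
      qed
      also have "\<dots> = (mat_adjoint A * B) $$ (c mod n, c' mod n)"
        using adj_mult_entry[OF A B, of "c mod n" "c' mod n"] n0 by simp
      also have "\<dots> = 0" using AB n0 by simp
      finally show ?thesis .
    next
      case False
      show ?thesis
      proof (rule sum.neutral, intro ballI)
        fix i assume i: "i \<in> {..<n}"
        then have dm: "(b*n+i) div n = b" using divmod_blk by auto
        show "?t (b*n+i) = 0" using False dm by auto
      qed
    qed
  qed
  finally show "(mat_adjoint (pad_kron r k A) * pad_kron r k B) $$ (c,c') = 0\<^sub>m r r $$ (c,c')" using c c' by simp
qed (use pad_carrier[OF A nk] pad_carrier[OF B nk] in auto)

lemma backward:
  assumes nk: "n*k \<le> r" and SC: "S \<in> carrier_mat r r" and TC: "T \<in> carrier_mat r r"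
    and SS: "mat_adjoint S * S = 1\<^sub>m r"
    and Phi: "\<forall>A \<in> carrier_mat n n. \<Phi> A = S * pad_kron r k A * T"
  shows "\<forall>A \<in> carrier_mat n n. \<forall>B \<in> carrier_mat n n.
            mat_adjoint A * B = 0\<^sub>m n n \<longrightarrow> mat_adjoint (\<Phi> A) * \<Phi> B = 0\<^sub>m r r"
proof (intro ballI impI)
  fix A B :: "complex mat" assume A: "A \<in> carrier_mat n n" and B: "B \<in> carrier_mat n n"
    and AB: "mat_adjoint A * B = 0\<^sub>m n n"
  have PA: "pad_kron r k A \<in> carrier_mat r r" by (rule pad_carrier[OF A nk])
  have PB: "pad_kron r k B \<in> carrier_mat r r" by (rule pad_carrier[OF B nk])
  have aS: "mat_adjoint S \<in> carrier_mat r r" using adj_carrier[OF SC] .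
  have aT: "mat_adjoint T \<in> carrier_mat r r" using adj_carrier[OF TC] .
  have aPA: "mat_adjoint (pad_kron r k A) \<in> carrier_mat r r" using adj_carrier[OF PA] .
  have "mat_adjoint (S * pad_kron r k A * T) = mat_adjoint T * mat_adjoint (S * pad_kron r k A)"
    by (rule adj_mult[OF mult_carrier_mat[OF SC PA] TC])
  also have "mat_adjoint (S * pad_kron r k A) = mat_adjoint (pad_kron r k A) * mat_adjoint S"
    by (rule adj_mult[OF SC PA])
  finally have adjA: "mat_adjoint (\<Phi> A) = mat_adjoint T * (mat_adjoint (pad_kron r k A) * mat_adjoint S)"
    using Phi A by simp
  have "mat_adjoint S * (S * pad_kron r k B * T) = mat_adjoint S * (S * (pad_kron r k B * T))"
    by (subst assoc_mult_mat[OF SC PB TC]) (rule refl)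
  also have "\<dots> = (mat_adjoint S * S) * (pad_kron r k B * T)"
    by (rule assoc_mult_mat[OF aS SC mult_carrier_mat[OF PB TC], symmetric])
  also have "\<dots> = pad_kron r k B * T" unfolding SS using PB TC by simp
  finally have e1: "mat_adjoint S * (S * pad_kron r k B * T) = pad_kron r k B * T" .
  have NC: "S * pad_kron r k B * T \<in> carrier_mat r r" using SC PB TC by simp
  have "mat_adjoint (\<Phi> A) * \<Phi> B = (mat_adjoint T * (mat_adjoint (pad_kron r k A) * mat_adjoint S)) * (S * pad_kron r k B * T)"
    unfolding adjA using Phi B by simp
  also have "\<dots> = mat_adjoint T * ((mat_adjoint (pad_kron r k A) * mat_adjoint S) * (S * pad_kron r k B * T))"
    by (rule assoc_mult_mat[OF aT mult_carrier_mat[OF aPA aS] NC])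
  also have "\<dots> = mat_adjoint T * (mat_adjoint (pad_kron r k A) * (mat_adjoint S * (S * pad_kron r k B * T)))"
    by (subst assoc_mult_mat[OF aPA aS NC]) (rule refl)
  also have "\<dots> = mat_adjoint T * (mat_adjoint (pad_kron r k A) * (pad_kron r k B * T))"
    unfolding e1 ..
  also have "\<dots> = mat_adjoint T * ((mat_adjoint (pad_kron r k A) * pad_kron r k B) * T)"
    by (subst assoc_mult_mat[OF aPA PB TC]) (rule refl)
  also have "\<dots> = 0\<^sub>m r r" unfolding pad_orth[OF A B nk AB] using aT TC by simp
  finally show "mat_adjoint (\<Phi> A) * \<Phi> B = 0\<^sub>m r r" .
qed

theorem theorem4p7:
  fixes \<Phi> :: "complex mat \<Rightarrow> complex mat" and n r :: nat
  assumes "lin_mat_map n r \<Phi>"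
  shows "(\<forall>A \<in> carrier_mat n n. \<forall>B \<in> carrier_mat n n.
            mat_adjoint A * B = 0\<^sub>m n n \<longrightarrow> mat_adjoint (\<Phi> A) * \<Phi> B = 0\<^sub>m r r)
         \<longleftrightarrow>
         (\<exists>k S T. n * k \<le> r \<and> S \<in> carrier_mat r r \<and> T \<in> carrier_mat r r \<and>
            mat_adjoint S * S = 1\<^sub>m r \<and>
            (\<forall>A \<in> carrier_mat n n. \<Phi> A = S * pad_kron r k A * T))"
proof
  assume rop: "\<forall>A \<in> carrier_mat n n. \<forall>B \<in> carrier_mat n n.
            mat_adjoint A * B = 0\<^sub>m n n \<longrightarrow> mat_adjoint (\<Phi> A) * \<Phi> B = 0\<^sub>m r r"
  interpret rop_ctx n r \<Phi> using assms rop by unfold_locales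
  show "\<exists>k S T. n * k \<le> r \<and> S \<in> carrier_mat r r \<and> T \<in> carrier_mat r r \<and>
            mat_adjoint S * S = 1\<^sub>m r \<and>
            (\<forall>A \<in> carrier_mat n n. \<Phi> A = S * pad_kron r k A * T)" by (rule forward)
next
  assume "\<exists>k S T. n * k \<le> r \<and> S \<in> carrier_mat r r \<and> T \<in> carrier_mat r r \<and>
            mat_adjoint S * S = 1\<^sub>m r \<and>
            (\<forall>A \<in> carrier_mat n n. \<Phi> A = S * pad_kron r k A * T)"
  then obtain k S T where "n * k \<le> r \<and> S \<in> carrier_mat r r \<and> T \<in> carrier_mat r r \<and>
            mat_adjoint S * S = 1\<^sub>m r \<and>
            (\<forall>A \<in> carrier_mat n n. \<Phi> A = S * pad_kron r k A * T)" by (elim exE) (rule that)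
  then show "\<forall>A \<in> carrier_mat n n. \<forall>B \<in> carrier_mat n n.
            mat_adjoint A * B = 0\<^sub>m n n \<longrightarrow> mat_adjoint (\<Phi> A) * \<Phi> B = 0\<^sub>m r r"
    by (elim conjE) (rule backward)
qed


end
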